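(* In the half-line setting, let $\mathcal{S}=\{j\ge0:r_j>0\}=\{j_1<j_2<\cdots\}$. Then: (1) if $\mathcal{S}=\emptyset$, $\mathrm{supp}(\mathcal{H}^{(S)})=\emptyset$; (2) if $1\le|\mathcal{S}|=n<\infty$, then $\mathrm{supp}(\mathcal{H}^{(S)})=\{j\in\mathbb{Z}_+:j\ge j_1\}$ if $C_T<\infty$ (transient walk); $\mathrm{supp}(\mathcal{H}^{(S)})=\emptyset$ if $C_T=\infty$ (recurrent walk) and $n=1$; and $\mathrm{supp}(\mathcal{H}^{(S)})=\{j\in\mathbb{Z}_+:j_1\le j\le j_n\}$ if $C_T=\infty$ and $n>1$; (3) if $|\mathcal{S}|=\infty$, $\mathrm{supp}(\mathcal{H}^{(S)})=\{j\in\mathbb{Z}_+:j\ge j_1\}$.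
   Context: Half-line setting: $V=\mathbb{Z}_+$, parameters $p_j,q_j,r_j\ge0$ with $p_j+q_j+r_j=1$, $q_0=0$, $p_j>0$ ($j\ge0$), $q_j>0$ ($j\ge1$). Arcs: $|j;R\rangle=\delta_{(j+1,j)}$ ($j\ge0$), $|j;L\rangle=\delta_{(j-1,j)}$ ($j\ge1$), $|j;O\rangle=\delta_{(j,j)}$ when $r_j>0$. Shift $S$: $|j;R\rangle\leftrightarrow|j+1;L\rangle$, $|j;O\rangle\mapsto|j;O\rangle$. $a_j=\sqrt{q_j}|j;L\rangle+\sqrt{r_j}|j;O\rangle+\sqrt{p_j}|j;R\rangle$, $b_j=Sa_j$. $\mathcal{H}^{(R)}$ is the closed span of $\{a_j,b_j:j\ge0\}$ in $\ell^2(A)$ and $\mathcal{H}^{(S)}=(\mathcal{H}^{(R)})^\perp$. For a subspace $\mathcal{H}'\subseteq\ell^2(A)$, $\mathrm{supp}(\mathcal{H}')=\{j\in\mathbb{Z}_+:\exists\phi\in\mathcal{H}',\ \exists J\in\{L,O,R\}\text{ with }\langle j;J|\phi\rangle\ne0\}$. $C_T=\sum_{j\ge1}\frac{q_1\cdots q_j}{p_1\cdots p_j}$; the walk is transient iff $C_T<\infty$, recurrent otherwise. *)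

theory Defs
  imports "HOL-Analysis.Analysis"
begin

text \<open>An arc is a pair of naturals; the arc
  (k, j) is attached to vertex j:  |j;R> = delta_(j+1,j),  |j;L> = delta_(j-1,j)
  (j \<ge> 1),  |j;O> = delta_(j,j) (when r j > 0).\<close>

definition arcs :: "(nat \<Rightarrow> real) \<Rightarrow> (nat \<times> nat) set" where
  "arcs r = {(Suc j, j) | j. True} \<union> {(j - 1, j) | j. j \<ge> 1} \<union> {(j, j) | j. r j > 0}"

definition l2A :: "(nat \<Rightarrow> real) \<Rightarrow> (nat \<times> nat \<Rightarrow> complex) set" where
  "l2A r = {f. (\<forall>x. x \<notin> arcs r \<longrightarrow> f x = 0) \<and> (\<lambda>x. (cmod (f x))\<^sup>2) summable_on UNIV}"

definition l2inner :: "(nat \<times> nat \<Rightarrow> complex) \<Rightarrow> (nat \<times> nat \<Rightarrow> complex) \<Rightarrow> complex" where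
  "l2inner f g = infsum (\<lambda>x. cnj (f x) * g x) UNIV"

definition l2norm :: "(nat \<times> nat \<Rightarrow> complex) \<Rightarrow> real" where
  "l2norm f = sqrt (infsum (\<lambda>x. (cmod (f x))\<^sup>2) UNIV)"

definition shiftS :: "(nat \<times> nat \<Rightarrow> complex) \<Rightarrow> (nat \<times> nat \<Rightarrow> complex)" where
  "shiftS f = (\<lambda>(x, y). f (y, x))"

definition avec :: "(nat \<Rightarrow> real) \<Rightarrow> (nat \<Rightarrow> real) \<Rightarrow> (nat \<Rightarrow> real) \<Rightarrow> nat \<Rightarrow> (nat \<times> nat \<Rightarrow> complex)" where
  "avec p q r j = (\<lambda>x.
      (if j \<ge> 1 \<and> x = (j - 1, j) then complex_of_real (sqrt (q j)) else 0)
    + (if r j > 0 \<and> x = (j, j) then complex_of_real (sqrt (r j)) else 0)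
    + (if x = (Suc j, j) then complex_of_real (sqrt (p j)) else 0))"

definition bvec :: "(nat \<Rightarrow> real) \<Rightarrow> (nat \<Rightarrow> real) \<Rightarrow> (nat \<Rightarrow> real) \<Rightarrow> nat \<Rightarrow> (nat \<times> nat \<Rightarrow> complex)" where
  "bvec p q r j = shiftS (avec p q r j)"

definition spanAB :: "(nat \<Rightarrow> real) \<Rightarrow> (nat \<Rightarrow> real) \<Rightarrow> (nat \<Rightarrow> real) \<Rightarrow> (nat \<times> nat \<Rightarrow> complex) set" where
  "spanAB p q r = {(\<lambda>x. \<Sum>i<N. c i * avec p q r i x + d i * bvec p q r i x) | N c d. True}"

definition HR :: "(nat \<Rightarrow> real) \<Rightarrow> (nat \<Rightarrow> real) \<Rightarrow> (nat \<Rightarrow> real) \<Rightarrow> (nat \<times> nat \<Rightarrow> complex) set" where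
  "HR p q r = {\<psi> \<in> l2A r. \<forall>e>0. \<exists>\<phi> \<in> spanAB p q r. l2norm (\<lambda>x. \<psi> x - \<phi> x) < e}"

definition HS :: "(nat \<Rightarrow> real) \<Rightarrow> (nat \<Rightarrow> real) \<Rightarrow> (nat \<Rightarrow> real) \<Rightarrow> (nat \<times> nat \<Rightarrow> complex) set" where
  "HS p q r = {\<phi> \<in> l2A r. \<forall>\<psi> \<in> HR p q r. l2inner \<psi> \<phi> = 0}"

definition supp_sub :: "(nat \<Rightarrow> real) \<Rightarrow> (nat \<times> nat \<Rightarrow> complex) set \<Rightarrow> nat set" where
  "supp_sub r H = {j. \<exists>\<phi> \<in> H.
      \<phi> (Suc j, j) \<noteq> 0 \<or> (j \<ge> 1 \<and> \<phi> (j - 1, j) \<noteq> 0) \<or> (r j > 0 \<and> \<phi> (j, j) \<noteq> 0)}"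

text \<open>C_T < infinity, i.e. sum_{j\<ge>1} (q_1...q_j)/(p_1...p_j) converges (terms are nonnegative).\<close>
definition CT_finite :: "(nat \<Rightarrow> real) \<Rightarrow> (nat \<Rightarrow> real) \<Rightarrow> bool" where
  "CT_finite p q = summable (\<lambda>j. \<Prod>k\<in>{1..Suc j}. q k / p k)"

end

theory Submission
  imports Defs
begin


lemma arcs_diag: "(j, j) \<in> arcs r \<longleftrightarrow> r j > 0" by (auto simp: arcs_def)
lemma arcs_R[simp]: "(Suc j, j) \<in> arcs r" by (auto simp: arcs_def)
lemma arcs_L[simp]: "(j, Suc j) \<in> arcs r"
proof -
  have "(j, Suc j) \<in> {(j - 1, j) | j. j \<ge> 1}" by (rule CollectI, rule exI[of _ "Suc j"]) simp
  then show ?thesis by (auto simp: arcs_def)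
qed

lemma arcs_cases: "x \<in> arcs r \<Longrightarrow> fst x = Suc (snd x) \<or> snd x = Suc (fst x) \<or> (fst x = snd x \<and> r (fst x) > 0)"
  by (auto simp: arcs_def)

lemma l2inner_fin:
  assumes "finite F" "\<And>x. x \<notin> F \<Longrightarrow> f x = 0"
  shows "l2inner f \<phi> = (\<Sum>x\<in>F. cnj (f x) * \<phi> x)"
proof -
  have "l2inner f \<phi> = infsum (\<lambda>x. cnj (f x) * \<phi> x) F"
    unfolding l2inner_def by (rule infsum_cong_neutral) (auto simp: assms(2))
  then show ?thesis using assms(1) by simp
qed

lemma fin_summable:
  assumes "finite F" "\<And>x. x \<notin> F \<Longrightarrow> f x = 0"
  shows "f summable_on A"
proof -
  have "f summable_on A \<longleftrightarrow> f summable_on (F \<inter> A)"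
    by (rule summable_on_cong_neutral) (auto simp: assms(2))
  then show ?thesis using assms(1) by simp
qed

lemma avec_zero: "x \<notin> {(j-1,j),(j,j),(Suc j,j)} \<Longrightarrow> avec p q r j x = 0"
  by (auto simp: avec_def)
lemma bvec_zero: "x \<notin> {(j,j-1),(j,j),(j,Suc j)} \<Longrightarrow> bvec p q r j x = 0"
  by (auto simp: bvec_def shiftS_def avec_def split: prod.splits)

lemma l2inner_avec:
  assumes "q 0 = 0" "r j \<ge> 0"
  shows "l2inner (avec p q r j) \<phi> = of_real (sqrt (q j)) * \<phi> (j - 1, j) + of_real (sqrt (r j)) * \<phi> (j, j) + of_real (sqrt (p j)) * \<phi> (Suc j, j)"
proof (cases "j = 0")
  case True
  have "l2inner (avec p q r j) \<phi> = (\<Sum>x\<in>{(0,0),(1,0)}. cnj (avec p q r j x) * \<phi> x)"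
    by (rule l2inner_fin) (auto simp: avec_def True)
  also have "\<dots> = of_real (sqrt (r 0)) * \<phi> (0,0) + of_real (sqrt (p 0)) * \<phi> (1,0)"
    using assms by (cases "r 0 > 0") (auto simp: avec_def True)
  finally show ?thesis using assms True by simp
next
  case False
  have "l2inner (avec p q r j) \<phi> = (\<Sum>x\<in>{(j-1,j),(j,j),(Suc j,j)}. cnj (avec p q r j x) * \<phi> x)"
    by (rule l2inner_fin) (auto simp: avec_zero)
  also have "\<dots> = of_real (sqrt (q j)) * \<phi> (j - 1, j) + of_real (sqrt (r j)) * \<phi> (j, j) + of_real (sqrt (p j)) * \<phi> (Suc j, j)"
    using False assms by (cases "r j > 0") (auto simp: avec_def gr0_conv_Suc)
  finally show ?thesis .
qed

lemma l2inner_bvec: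
  assumes "q 0 = 0" "r j \<ge> 0"
  shows "l2inner (bvec p q r j) \<phi> = of_real (sqrt (q j)) * \<phi> (j, j - 1) + of_real (sqrt (r j)) * \<phi> (j, j) + of_real (sqrt (p j)) * \<phi> (j, Suc j)"
proof (cases "j = 0")
  case True
  have "l2inner (bvec p q r j) \<phi> = (\<Sum>x\<in>{(0,0),(0,1)}. cnj (bvec p q r j x) * \<phi> x)"
    by (rule l2inner_fin) (auto simp: bvec_def shiftS_def avec_def True split: prod.splits)
  also have "\<dots> = of_real (sqrt (r 0)) * \<phi> (0,0) + of_real (sqrt (p 0)) * \<phi> (0,1)"
    using assms by (cases "r 0 > 0") (auto simp: bvec_def shiftS_def avec_def True)
  finally show ?thesis using assms True by simp
next
  case False
  have "l2inner (bvec p q r j) \<phi> = (\<Sum>x\<in>{(j,j-1),(j,j),(j,Suc j)}. cnj (bvec p q r j x) * \<phi> x)"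
    by (rule l2inner_fin) (auto simp: bvec_zero)
  also have "\<dots> = of_real (sqrt (q j)) * \<phi> (j, j - 1) + of_real (sqrt (r j)) * \<phi> (j, j) + of_real (sqrt (p j)) * \<phi> (j, Suc j)"
    using False assms by (cases "r j > 0") (auto simp: bvec_def shiftS_def avec_def gr0_conv_Suc)
  finally show ?thesis .
qed

lemma fin_l2A:
  assumes "finite F" "\<And>x. x \<notin> F \<Longrightarrow> f x = 0" "\<And>x. x \<notin> arcs r \<Longrightarrow> f x = 0"
  shows "f \<in> l2A r"
  unfolding l2A_def using assms by (auto intro!: fin_summable[of F])

lemma l2norm_zero[simp]: "l2norm (\<lambda>x. 0) = 0" by (simp add: l2norm_def)

lemma avec_l2A: "avec p q r j \<in> l2A r"
proof (rule fin_l2A[of "{(j-1,j),(j,j),(Suc j,j)}"])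
  fix x assume x: "x \<notin> arcs r"
  have "x \<noteq> (Suc j, j)" using x by auto
  moreover have "\<not> (r j > 0 \<and> x = (j,j))" using x arcs_diag by auto
  moreover have "\<not> (j \<ge> 1 \<and> x = (j-1,j))" using x arcs_L[of "j-1" r] by (cases j) auto
  ultimately show "avec p q r j x = 0" by (auto simp add: avec_def)
qed (auto simp: avec_zero)

lemma bvec_l2A: "bvec p q r j \<in> l2A r"
proof (rule fin_l2A[of "{(j,j-1),(j,j),(j,Suc j)}"])
  fix x assume x: "x \<notin> arcs r"
  have "x \<noteq> (j, Suc j)" using x by auto
  moreover have "\<not> (r j > 0 \<and> x = (j,j))" using x arcs_diag by auto
  moreover have "\<not> (j \<ge> 1 \<and> x = (j,j-1))" using x arcs_R[of "j-1" r] by (cases j) auto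
  ultimately show "bvec p q r j x = 0" by (auto simp add: bvec_def shiftS_def avec_def split: prod.splits)
qed (auto simp: bvec_zero)

lemma in_HR_span:
  assumes "f \<in> l2A r" "f \<in> spanAB p q r" shows "f \<in> HR p q r"
  unfolding HR_def using assms by force

lemma avec_HR: "avec p q r j \<in> HR p q r"
proof (rule in_HR_span[OF avec_l2A])
  have eq: "(\<lambda>x. \<Sum>i<Suc j. (if i = j then 1 else 0) * avec p q r i x + 0 * bvec p q r i x) = avec p q r j"
  proof
    fix x
    have "(\<Sum>i<Suc j. (if i = j then 1 else 0) * avec p q r i x + 0 * bvec p q r i x)
        = (\<Sum>i<Suc j. if i = j then avec p q r i x else 0)" by (rule sum.cong) auto
    then show "(\<Sum>i<Suc j. (if i = j then 1 else 0) * avec p q r i x + 0 * bvec p q r i x) = avec p q r j x"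
      by simp
  qed
  show "avec p q r j \<in> spanAB p q r"
    unfolding spanAB_def by (rule CollectI, intro exI conjI, rule eq[symmetric]) simp
qed

lemma bvec_HR: "bvec p q r j \<in> HR p q r"
proof (rule in_HR_span[OF bvec_l2A])
  have eq: "(\<lambda>x. \<Sum>i<Suc j. 0 * avec p q r i x + (if i = j then 1 else 0) * bvec p q r i x) = bvec p q r j"
  proof
    fix x
    have "(\<Sum>i<Suc j. 0 * avec p q r i x + (if i = j then 1 else 0) * bvec p q r i x)
        = (\<Sum>i<Suc j. if i = j then bvec p q r i x else 0)" by (rule sum.cong) auto
    then show "(\<Sum>i<Suc j. 0 * avec p q r i x + (if i = j then 1 else 0) * bvec p q r i x) = bvec p q r j x"
      by simp
  qed
  show "bvec p q r j \<in> spanAB p q r"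
    unfolding spanAB_def by (rule CollectI, intro exI conjI, rule eq[symmetric]) simp
qed




lemma sq_ineq: fixes a b :: complex shows "(cmod (a - b))^2 \<le> 2*(cmod a)^2 + 2*(cmod b)^2"
proof -
  have "cmod (a - b) \<le> cmod a + cmod b" by (rule norm_triangle_ineq4)
  then have "(cmod (a-b))^2 \<le> (cmod a + cmod b)^2" by (rule power_mono) simp
  moreover have "(cmod a + cmod b)^2 + (cmod a - cmod b)^2 = 2*(cmod a)^2 + 2*(cmod b)^2"
    by (simp add: power2_eq_square algebra_simps)
  moreover have "0 \<le> (cmod a - cmod b)^2" by simp
  ultimately show ?thesis by linarith
qed

lemma sq_summable_diff:
  fixes f g :: "'a \<Rightarrow> complex"
  assumes "(\<lambda>x. (cmod (f x))^2) summable_on A" "(\<lambda>x. (cmod (g x))^2) summable_on A"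
  shows "(\<lambda>x. (cmod (f x - g x))^2) summable_on A"
proof (rule summable_on_comparison_test)
  show "(\<lambda>x. 2*(cmod (f x))^2 + 2*(cmod (g x))^2) summable_on A"
    using assms by (intro summable_on_add summable_on_cmult_right)
qed (auto simp: sq_ineq)

lemma amgm:
  fixes x y t :: real assumes "x \<ge> 0" "y \<ge> 0" "t > 0"
  shows "x * y \<le> (t * x^2 + y^2 / t) / 2"
proof -
  have id: "(t * x^2 + y^2 / t) / 2 - x*y = (t*x - y)^2/(2*t)" using assms
    by (simp add: field_simps power2_eq_square)
  have "(t*x - y)^2/(2*t) \<ge> 0" using assms by simp
  then show ?thesis using id by linarith
qed

lemma inner_bound:
  fixes g \<phi> :: "'a \<Rightarrow> complex"
  assumes sg: "(\<lambda>x. (cmod (g x))^2) summable_on UNIV" and sp: "(\<lambda>x. (cmod (\<phi> x))^2) summable_on UNIV" and t: "t > 0"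
  shows "(\<lambda>x. cnj (g x) * \<phi> x) summable_on UNIV"
    and "cmod (infsum (\<lambda>x. cnj (g x) * \<phi> x) UNIV) \<le> (t * infsum (\<lambda>x. (cmod (g x))^2) UNIV + infsum (\<lambda>x. (cmod (\<phi> x))^2) UNIV / t) / 2"
proof -
  define h where "h x = (t/2) * (cmod (g x))^2 + (1/(2*t)) * (cmod (\<phi> x))^2" for x
  have hs: "h summable_on UNIV" unfolding h_def using sg sp by (intro summable_on_add summable_on_cmult_right)
  have le: "norm (cnj (g x) * \<phi> x) \<le> h x" for x
  proof -
    have "norm (cnj (g x) * \<phi> x) = cmod (g x) * cmod (\<phi> x)" by (simp add: norm_mult)
    also have "\<dots> \<le> (t * (cmod (g x))^2 + (cmod (\<phi> x))^2 / t)/2" by (rule amgm) (use t in auto)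
    also have "\<dots> = h x" by (simp add: h_def field_simps)
    finally show ?thesis .
  qed
  have abs: "(\<lambda>x. norm (cnj (g x) * \<phi> x)) summable_on UNIV"
    by (rule summable_on_comparison_test[OF hs]) (use le in auto)
  show "(\<lambda>x. cnj (g x) * \<phi> x) summable_on UNIV" by (rule abs_summable_summable[OF abs])
  have "cmod (infsum (\<lambda>x. cnj (g x) * \<phi> x) UNIV) \<le> infsum (\<lambda>x. norm (cnj (g x) * \<phi> x)) UNIV"
    by (rule norm_infsum_bound[OF abs])
  also have "\<dots> \<le> infsum h UNIV" by (rule infsum_mono[OF abs hs]) (use le in auto)
  also have "infsum h UNIV = infsum (\<lambda>x. (t/2)*(cmod (g x))^2) UNIV + infsum (\<lambda>x. (1/(2*t))*(cmod (\<phi> x))^2) UNIV"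
    unfolding h_def by (rule infsum_add) (intro summable_on_cmult_right sg sp)+
  also have "\<dots> = (t/2) * infsum (\<lambda>x. (cmod (g x))^2) UNIV + (1/(2*t)) * infsum (\<lambda>x. (cmod (\<phi> x))^2) UNIV"
    using infsum_cmult_right[of "t/2" "(\<lambda>x. (cmod (g x))^2)" UNIV] infsum_cmult_right[of "1/(2*t)" "(\<lambda>x. (cmod (\<phi> x))^2)" UNIV] sg sp
    by presburger
  also have "\<dots> = (t * infsum (\<lambda>x. (cmod (g x))^2) UNIV + infsum (\<lambda>x. (cmod (\<phi> x))^2) UNIV / t) / 2"
    using t by (simp add: field_simps)
  finally show "cmod (infsum (\<lambda>x. cnj (g x) * \<phi> x) UNIV) \<le> (t * infsum (\<lambda>x. (cmod (g x))^2) UNIV + infsum (\<lambda>x. (cmod (\<phi> x))^2) UNIV / t) / 2" .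
qed

lemma span_form:
  assumes "ch \<in> spanAB p q r"
  obtains N c d where "ch = (\<lambda>x. \<Sum>i<N. c i * avec p q r i x + d i * bvec p q r i x)"
  using assms unfolding spanAB_def by auto

definition spanF :: "nat \<Rightarrow> (nat \<times> nat) set" where
  "spanF N = (\<Union>i<N. {(i-1,i),(i,i),(Suc i,i)} \<union> {(i,i-1),(i,i),(i,Suc i)})"

lemma spanF_finite: "finite (spanF N)" by (simp add: spanF_def)

lemma avec_zero_F: "i < N \<Longrightarrow> x \<notin> spanF N \<Longrightarrow> avec p q r i x = 0"
  by (rule avec_zero) (auto simp: spanF_def)
lemma bvec_zero_F: "i < N \<Longrightarrow> x \<notin> spanF N \<Longrightarrow> bvec p q r i x = 0"
  by (rule bvec_zero) (auto simp: spanF_def)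

lemma span_fin:
  assumes "ch \<in> spanAB p q r"
  obtains F where "finite F" "\<And>x. x \<notin> F \<Longrightarrow> ch x = 0"
proof -
  obtain N c d where chi: "ch = (\<lambda>x. \<Sum>i<N. c i * avec p q r i x + d i * bvec p q r i x)"
    using assms by (rule span_form)
  have "ch x = 0" if "x \<notin> spanF N" for x
    unfolding chi using that by (auto intro!: sum.neutral simp: avec_zero_F bvec_zero_F)
  then show ?thesis using that spanF_finite by blast
qed

lemma span_orth:
  assumes "ch \<in> spanAB p q r" "\<And>j. l2inner (avec p q r j) \<phi> = 0" "\<And>j. l2inner (bvec p q r j) \<phi> = 0"
  shows "l2inner ch \<phi> = 0"
proof -
  obtain N c d where chi: "ch = (\<lambda>x. \<Sum>i<N. c i * avec p q r i x + d i * bvec p q r i x)"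
    using assms(1) by (rule span_form)
  define F where "F = spanF N"
  have fin: "finite F" by (simp add: F_def spanF_finite)
  have z: "ch x = 0" if "x \<notin> F" for x
    unfolding chi using that by (auto intro!: sum.neutral simp: avec_zero_F bvec_zero_F F_def)
  have ia: "l2inner (avec p q r i) \<phi> = (\<Sum>x\<in>F. cnj (avec p q r i x) * \<phi> x)" if "i < N" for i
    by (rule l2inner_fin[OF fin]) (use that in \<open>auto simp: avec_zero_F F_def\<close>)
  have ib: "l2inner (bvec p q r i) \<phi> = (\<Sum>x\<in>F. cnj (bvec p q r i x) * \<phi> x)" if "i < N" for i
    by (rule l2inner_fin[OF fin]) (use that in \<open>auto simp: bvec_zero_F F_def\<close>)
  have "l2inner ch \<phi> = (\<Sum>x\<in>F. cnj (ch x) * \<phi> x)" by (rule l2inner_fin[OF fin z])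
  also have "\<dots> = (\<Sum>x\<in>F. \<Sum>i<N. cnj (c i) * (cnj (avec p q r i x) * \<phi> x) + cnj (d i) * (cnj (bvec p q r i x) * \<phi> x))"
    by (simp add: chi cnj_sum sum_distrib_left sum_distrib_right algebra_simps)
  also have "\<dots> = (\<Sum>i<N. \<Sum>x\<in>F. cnj (c i) * (cnj (avec p q r i x) * \<phi> x) + cnj (d i) * (cnj (bvec p q r i x) * \<phi> x))"
    by (rule sum.swap)
  also have "\<dots> = (\<Sum>i<N. cnj (c i) * (\<Sum>x\<in>F. cnj (avec p q r i x) * \<phi> x) + cnj (d i) * (\<Sum>x\<in>F. cnj (bvec p q r i x) * \<phi> x))"
    by (simp add: sum.distrib sum_distrib_left)
  also have "\<dots> = (\<Sum>i<N. cnj (c i) * l2inner (avec p q r i) \<phi> + cnj (d i) * l2inner (bvec p q r i) \<phi>)"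
    by (rule sum.cong) (auto simp: ia ib)
  also have "\<dots> = 0" by (simp add: assms(2,3))
  finally show ?thesis .
qed

lemma half_lt: "(X::real) < m \<Longrightarrow> 0 < m \<Longrightarrow> X/2 < m" by linarith

lemma HR_orth:
  assumes phi: "\<phi> \<in> l2A r" and A: "\<And>j. l2inner (avec p q r j) \<phi> = 0" and B: "\<And>j. l2inner (bvec p q r j) \<phi> = 0"
    and psi: "\<psi> \<in> HR p q r"
  shows "l2inner \<psi> \<phi> = 0"
proof (rule ccontr)
  assume ne: "l2inner \<psi> \<phi> \<noteq> 0"
  define m where "m = cmod (l2inner \<psi> \<phi>)"
  have m: "m > 0" using ne by (simp add: m_def)
  define Bn where "Bn = infsum (\<lambda>x. (cmod (\<phi> x))^2) UNIV"
  have Bn: "Bn \<ge> 0" unfolding Bn_def by (rule infsum_nonneg) simp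
  have sp: "(\<lambda>x. (cmod (\<phi> x))^2) summable_on UNIV" using phi by (simp add: l2A_def)
  have psl2: "\<psi> \<in> l2A r" and appr: "\<forall>e>0. \<exists>ch\<in>spanAB p q r. l2norm (\<lambda>x. \<psi> x - ch x) < e"
    using psi by (auto simp: HR_def)
  have sps: "(\<lambda>x. (cmod (\<psi> x))^2) summable_on UNIV" using psl2 by (simp add: l2A_def)
  have key: "m \<le> (t * e^2 + Bn/t)/2" if t: "t > 0" and e: "e > 0" for t e
  proof -
    obtain ch where chi: "ch \<in> spanAB p q r" and lt: "l2norm (\<lambda>x. \<psi> x - ch x) < e"
      using appr e by blast
    obtain F where F: "finite F" "\<And>x. x \<notin> F \<Longrightarrow> ch x = 0" using span_fin[OF chi] by blast
    have sc: "(\<lambda>x. (cmod (ch x))^2) summable_on UNIV" by (rule fin_summable[OF F(1)]) (simp add: F(2))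
    define g where "g x = \<psi> x - ch x" for x
    have sg: "(\<lambda>x. (cmod (g x))^2) summable_on UNIV" unfolding g_def by (rule sq_summable_diff[OF sps sc])
    define An where "An = infsum (\<lambda>x. (cmod (g x))^2) UNIV"
    have An0: "An \<ge> 0" unfolding An_def by (rule infsum_nonneg) simp
    have "sqrt An < e" using lt by (simp add: l2norm_def An_def g_def)
    then have "An < e^2" using An0 e by (metis real_sqrt_less_iff real_sqrt_pow2 power_strict_mono real_sqrt_ge_zero zero_less_numeral)
    have s1: "(\<lambda>x. cnj (g x) * \<phi> x) summable_on UNIV" by (rule inner_bound(1)[OF sg sp t])
    have b1: "cmod (infsum (\<lambda>x. cnj (g x) * \<phi> x) UNIV) \<le> (t * An + Bn / t) / 2"
      unfolding An_def Bn_def by (rule inner_bound(2)[OF sg sp t])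
    have s2: "(\<lambda>x. cnj (ch x) * \<phi> x) summable_on UNIV" by (rule fin_summable[OF F(1)]) (simp add: F(2))
    have "l2inner \<psi> \<phi> = infsum (\<lambda>x. cnj (g x) * \<phi> x + cnj (ch x) * \<phi> x) UNIV"
      unfolding l2inner_def g_def by (simp add: algebra_simps)
    also have "\<dots> = infsum (\<lambda>x. cnj (g x) * \<phi> x) UNIV + l2inner ch \<phi>"
      unfolding l2inner_def by (rule infsum_add[OF s1 s2])
    also have "l2inner ch \<phi> = 0" by (rule span_orth[OF chi A B])
    finally have "m \<le> (t * An + Bn / t) / 2" using b1 by (simp add: m_def)
    also have "\<dots> \<le> (t * e^2 + Bn / t) / 2" using \<open>An < e^2\<close> t by simp
    finally show ?thesis .
  qed
  define t where "t = 2 * (Bn + 1) / m"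
  have t: "t > 0" using m Bn by (simp add: t_def)
  define e where "e = sqrt (m / (2*t))"
  have e: "e > 0" using m t by (simp add: e_def)
  have "t * e^2 = m / 2" using m t by (simp add: e_def)
  moreover have "Bn / t < m / 2" using m Bn by (simp add: t_def field_simps)
  ultimately have "t * e^2 + Bn/t < m" by linarith
  then have "(t * e^2 + Bn/t)/2 < m" by (rule half_lt[OF _ m])
  with key[OF t e] show False by linarith
qed




definition F2 :: "(nat \<Rightarrow> real) \<Rightarrow> (nat \<Rightarrow> real) \<Rightarrow> (nat \<Rightarrow> real) \<Rightarrow> (nat \<Rightarrow> complex) \<Rightarrow> (nat \<Rightarrow> complex) \<Rightarrow> bool" where
  "F2 p q r s w \<longleftrightarrow> (\<forall>j. of_real (sqrt (q j)) * s (j - 1) + of_real (sqrt (r j)) * w j + of_real (sqrt (p j)) * s j = 0)"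

definition Good :: "(nat \<Rightarrow> real) \<Rightarrow> (nat \<Rightarrow> real) \<Rightarrow> (nat \<Rightarrow> real) \<Rightarrow> (nat \<Rightarrow> complex) \<Rightarrow> (nat \<Rightarrow> complex) \<Rightarrow> bool" where
  "Good p q r s w \<longleftrightarrow> F2 p q r s w \<and> (\<forall>j. \<not> r j > 0 \<longrightarrow> w j = 0) \<and> summable (\<lambda>j. (cmod (s j))^2) \<and> summable (\<lambda>j. (cmod (w j))^2)"

definition mkphi :: "(nat \<Rightarrow> complex) \<Rightarrow> (nat \<Rightarrow> complex) \<Rightarrow> nat \<times> nat \<Rightarrow> complex" where
  "mkphi s w x = (if fst x = Suc (snd x) then s (snd x) else if snd x = Suc (fst x) then s (fst x) else if fst x = snd x then w (fst x) else 0)"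

definition Tset :: "(nat \<Rightarrow> real) \<Rightarrow> (nat \<Rightarrow> real) \<Rightarrow> (nat \<Rightarrow> real) \<Rightarrow> nat set" where
  "Tset p q r = {j. \<exists>s w. Good p q r s w \<and> (s j \<noteq> 0 \<or> (1 \<le> j \<and> s (j - 1) \<noteq> 0) \<or> w j \<noteq> 0)}"

lemma mkphi_R[simp]: "mkphi s w (Suc j, j) = s j" by (simp add: mkphi_def)
lemma mkphi_L[simp]: "mkphi s w (j, Suc j) = s j" by (simp add: mkphi_def)
lemma mkphi_D[simp]: "mkphi s w (j, j) = w j" by (simp add: mkphi_def)

lemma summable_line:
  assumes "(\<lambda>x. (cmod (\<phi> x))^2) summable_on UNIV" "inj h"
  shows "summable (\<lambda>j. (cmod (\<phi> (h j)))^2)"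
proof -
  have "(\<lambda>x. (cmod (\<phi> x))^2) summable_on range h" by (rule summable_on_subset_banach[OF assms(1)]) auto
  then have "((\<lambda>x. (cmod (\<phi> x))^2) \<circ> h) summable_on UNIV"
    using summable_on_reindex[of h UNIV "(\<lambda>x. (cmod (\<phi> x))^2)"] assms(2) by simp
  then show ?thesis by (subst summable_on_UNIV_nonneg_real_iff[symmetric]) (auto simp: o_def)
qed

lemma summable_on_line:
  assumes "inj h" "summable f" "\<And>j. f j \<ge> (0::real)" "\<And>x. x \<notin> range h \<Longrightarrow> G x = 0" "\<And>j. G (h j) = f j"
  shows "G summable_on UNIV"
proof -
  have "f summable_on UNIV" using assms(2,3) summable_on_UNIV_nonneg_real_iff by blast
  then have "(G \<circ> h) summable_on UNIV" using assms(5) by (simp add: o_def)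
  then have "G summable_on range h" using summable_on_reindex[of h UNIV G] assms(1) by simp
  moreover have "G summable_on UNIV \<longleftrightarrow> G summable_on range h"
    by (rule summable_on_cong_neutral) (auto simp: assms(4))
  ultimately show ?thesis by simp
qed

locale qw =
  fixes p q r :: "nat \<Rightarrow> real"
  assumes qnn: "\<And>j. q j \<ge> 0" and rnn: "\<And>j. r j \<ge> 0" and q0: "q 0 = 0"
    and ppos: "\<And>j. p j > 0" and qpos: "\<And>j. j \<ge> 1 \<Longrightarrow> q j > 0"
begin

lemma sqp_nz[simp]: "complex_of_real (sqrt (p j)) \<noteq> 0" using ppos[of j] by simp

lemma HS_char: "\<phi> \<in> HS p q r \<longleftrightarrow> \<phi> \<in> l2A r \<and> (\<forall>j. l2inner (avec p q r j) \<phi> = 0 \<and> l2inner (bvec p q r j) \<phi> = 0)"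
  using avec_HR bvec_HR HR_orth unfolding HS_def by blast

lemma HS_seq:
  assumes "\<phi> \<in> HS p q r"
  shows "Good p q r (\<lambda>j. \<phi> (Suc j, j)) (\<lambda>j. \<phi> (j,j))" and "\<And>j. \<phi> (j, Suc j) = \<phi> (Suc j, j)"
proof -
  have l2: "\<phi> \<in> l2A r" and Ia: "\<And>j. l2inner (avec p q r j) \<phi> = 0" and Ib: "\<And>j. l2inner (bvec p q r j) \<phi> = 0"
    using assms by (auto simp: HS_char)
  have EA: "of_real (sqrt (q j)) * \<phi> (j - 1, j) + of_real (sqrt (r j)) * \<phi> (j, j) + of_real (sqrt (p j)) * \<phi> (Suc j, j) = 0" for j
    using Ia[of j] l2inner_avec[where q=q and r=r and j=j, OF q0 rnn] by simp
  have EB: "of_real (sqrt (q j)) * \<phi> (j, j - 1) + of_real (sqrt (r j)) * \<phi> (j, j) + of_real (sqrt (p j)) * \<phi> (j, Suc j) = 0" for j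
    using Ib[of j] l2inner_bvec[where q=q and r=r and j=j, OF q0 rnn] by simp
  have sym: "\<phi> (j, Suc j) = \<phi> (Suc j, j)" for j
  proof (induction j)
    case 0
    have e1: "of_real (sqrt (r 0)) * \<phi> (0, 0) + of_real (sqrt (p 0)) * \<phi> (Suc 0, 0) = 0" using EA[of 0] q0 by simp
    have e2: "of_real (sqrt (r 0)) * \<phi> (0, 0) + of_real (sqrt (p 0)) * \<phi> (0, Suc 0) = 0" using EB[of 0] q0 by simp
    have "of_real (sqrt (p 0)) * \<phi> (Suc 0, 0) = of_real (sqrt (p 0)) * \<phi> (0, Suc 0)"
      using e1 e2 by (metis add_left_cancel)
    then show ?case using ppos[of 0] by auto
  next
    case (Suc j)
    have e1: "of_real (sqrt (q (Suc j))) * \<phi> (Suc j, j) + of_real (sqrt (r (Suc j))) * \<phi> (Suc j, Suc j) + of_real (sqrt (p (Suc j))) * \<phi> (Suc (Suc j), Suc j) = 0"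
      using EA[of "Suc j"] Suc.IH by simp
    have e2: "of_real (sqrt (q (Suc j))) * \<phi> (Suc j, j) + of_real (sqrt (r (Suc j))) * \<phi> (Suc j, Suc j) + of_real (sqrt (p (Suc j))) * \<phi> (Suc j, Suc (Suc j)) = 0"
      using EB[of "Suc j"] by simp
    have "of_real (sqrt (p (Suc j))) * \<phi> (Suc (Suc j), Suc j) = of_real (sqrt (p (Suc j))) * \<phi> (Suc j, Suc (Suc j))"
      using e1 e2 by (metis add_left_cancel)
    then show ?case using ppos[of "Suc j"] by auto
  qed
  then show "\<And>j. \<phi> (j, Suc j) = \<phi> (Suc j, j)" .
  have F: "F2 p q r (\<lambda>j. \<phi> (Suc j, j)) (\<lambda>j. \<phi> (j,j))"
    unfolding F2_def
  proof
    fix j show "of_real (sqrt (q j)) * \<phi> (Suc (j - 1), j - 1) + of_real (sqrt (r j)) * \<phi> (j, j) + of_real (sqrt (p j)) * \<phi> (Suc j, j) = 0"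
    proof (cases j)
      case 0 then show ?thesis using EA[of 0] q0 by simp
    next
      case (Suc i) then show ?thesis using EA[of j] sym[of i] by simp
    qed
  qed
  have W: "\<forall>j. \<not> r j > 0 \<longrightarrow> \<phi> (j, j) = 0" using l2 arcs_diag by (auto simp: l2A_def)
  have sq: "(\<lambda>x. (cmod (\<phi> x))^2) summable_on UNIV" using l2 by (simp add: l2A_def)
  have s1: "summable (\<lambda>j. (cmod (\<phi> (Suc j, j)))^2)" by (rule summable_line[OF sq, of "\<lambda>j. (Suc j, j)", simplified]) (auto simp: inj_def)
  have s2: "summable (\<lambda>j. (cmod (\<phi> (j, j)))^2)" by (rule summable_line[OF sq, of "\<lambda>j. (j, j)", simplified]) (auto simp: inj_def)
  show "Good p q r (\<lambda>j. \<phi> (Suc j, j)) (\<lambda>j. \<phi> (j,j))" using F W s1 s2 by (simp add: Good_def)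
qed

lemma seq_HS:
  assumes "Good p q r s w" shows "mkphi s w \<in> HS p q r"
proof -
  from assms have F: "F2 p q r s w" and W: "\<And>j. \<not> r j > 0 \<Longrightarrow> w j = 0"
    and ss: "summable (\<lambda>j. (cmod (s j))^2)" and sw: "summable (\<lambda>j. (cmod (w j))^2)" by (auto simp: Good_def)
  have Fj: "of_real (sqrt (q j)) * s (j - 1) + of_real (sqrt (r j)) * w j + of_real (sqrt (p j)) * s j = 0" for j
    using F by (simp add: F2_def)
  have zero: "mkphi s w x = 0" if "x \<notin> arcs r" for x
  proof -
    obtain a b where x: "x = (a,b)" by fastforce
    have "a \<noteq> Suc b" using that x arcs_R by auto
    moreover have "b \<noteq> Suc a" using that x arcs_L by auto
    moreover have "a = b \<Longrightarrow> w a = 0" using that x arcs_diag W by auto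
    ultimately show ?thesis by (auto simp: mkphi_def x)
  qed
  define A where "A x = (if fst x = Suc (snd x) then (cmod (s (snd x)))^2 else 0)" for x :: "nat \<times> nat"
  define B where "B x = (if snd x = Suc (fst x) then (cmod (s (fst x)))^2 else 0)" for x :: "nat \<times> nat"
  define C where "C x = (if fst x = snd x then (cmod (w (fst x)))^2 else 0)" for x :: "nat \<times> nat"
  have sA: "A summable_on UNIV"
  proof (rule summable_on_line[of "\<lambda>j. (Suc j, j)" "\<lambda>j. (cmod (s j))^2"])
    fix x :: "nat \<times> nat" assume "x \<notin> range (\<lambda>j. (Suc j, j))" then show "A x = 0"
      by (cases x) (auto simp: A_def)
  qed (auto simp: A_def inj_def ss)
  have sB: "B summable_on UNIV"
  proof (rule summable_on_line[of "\<lambda>j. (j, Suc j)" "\<lambda>j. (cmod (s j))^2"])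
    fix x :: "nat \<times> nat" assume "x \<notin> range (\<lambda>j. (j, Suc j))" then show "B x = 0"
      by (cases x) (auto simp: B_def)
  qed (auto simp: B_def inj_def ss)
  have sC: "C summable_on UNIV"
  proof (rule summable_on_line[of "\<lambda>j. (j, j)" "\<lambda>j. (cmod (w j))^2"])
    fix x :: "nat \<times> nat" assume "x \<notin> range (\<lambda>j. (j, j))" then show "C x = 0"
      by (cases x) (auto simp: C_def)
  qed (auto simp: C_def inj_def sw)
  have eq: "(\<lambda>x. (cmod (mkphi s w x))^2) = (\<lambda>x. A x + B x + C x)"
    by (rule ext, case_tac x) (auto simp: mkphi_def A_def B_def C_def)
  have l2: "mkphi s w \<in> l2A r" unfolding l2A_def using zero eq sA sB sC
    by (auto intro!: summable_on_add)
  have Ia: "l2inner (avec p q r j) (mkphi s w) = 0" for j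
    unfolding l2inner_avec[where q=q and r=r and j=j, OF q0 rnn] using Fj[of j] q0 by (cases j) (auto simp: mkphi_def)
  have Ib: "l2inner (bvec p q r j) (mkphi s w) = 0" for j
    unfolding l2inner_bvec[where q=q and r=r and j=j, OF q0 rnn] using Fj[of j] q0 by (cases j) (auto simp: mkphi_def)
  show ?thesis using l2 Ia Ib by (simp add: HS_char)
qed

lemma supp_T: "supp_sub r (HS p q r) = Tset p q r"
proof
  show "supp_sub r (HS p q r) \<subseteq> Tset p q r"
  proof
    fix j assume "j \<in> supp_sub r (HS p q r)"
    then obtain \<phi> where phi: "\<phi> \<in> HS p q r" and
      c: "\<phi> (Suc j, j) \<noteq> 0 \<or> (j \<ge> 1 \<and> \<phi> (j - 1, j) \<noteq> 0) \<or> (r j > 0 \<and> \<phi> (j, j) \<noteq> 0)"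
      by (auto simp: supp_sub_def)
    have G: "Good p q r (\<lambda>j. \<phi> (Suc j, j)) (\<lambda>j. \<phi> (j,j))" by (rule HS_seq(1)[OF phi])
    have "j \<ge> 1 \<Longrightarrow> \<phi> (j - 1, j) = \<phi> (Suc (j - 1), j - 1)"
      using HS_seq(2)[OF phi, of "j-1"] by (cases j) auto
    then show "j \<in> Tset p q r" unfolding Tset_def using G c by (intro CollectI exI[of _ "\<lambda>j. \<phi> (Suc j, j)"] exI[of _ "\<lambda>j. \<phi> (j,j)"]) auto
  qed
  show "Tset p q r \<subseteq> supp_sub r (HS p q r)"
  proof
    fix j assume "j \<in> Tset p q r"
    then obtain s w where G: "Good p q r s w" and c: "s j \<noteq> 0 \<or> (1 \<le> j \<and> s (j - 1) \<noteq> 0) \<or> w j \<noteq> 0"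
      by (auto simp: Tset_def)
    have W: "w j \<noteq> 0 \<Longrightarrow> r j > 0" using G by (auto simp: Good_def)
    have "j \<ge> 1 \<Longrightarrow> mkphi s w (j - 1, j) = s (j - 1)" by (cases j) auto
    then show "j \<in> supp_sub r (HS p q r)" unfolding supp_sub_def using seq_HS[OF G] c W
      by (intro CollectI bexI[of _ "mkphi s w"]) auto
  qed
qed

end




lemma prod_split1:
  fixes f :: "nat \<Rightarrow> real"
  assumes "m \<le> n"
  shows "(\<Prod>k\<in>{1..n}. f k) = (\<Prod>k\<in>{1..m}. f k) * (\<Prod>k\<in>{Suc m..n}. f k)"
  using assms
proof (induction n rule: dec_induct)
  case base then show ?case by simp
next
  case (step n) then show ?case by (simp add: mult.assoc)
qed

context qw begin

definition gg :: "nat \<Rightarrow> real" where "gg k = - (sqrt (q k) / sqrt (p k))"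

lemma gg_sq: "(gg k)^2 = q k / p k"
  using qnn[of k] ppos[of k] by (simp add: gg_def power_divide)

lemma gg_nz: "k \<ge> 1 \<Longrightarrow> gg k \<noteq> 0" using qpos[of k] ppos[of k] by (simp add: gg_def)

lemma sqp_gg: "sqrt (q k) + sqrt (p k) * gg k = 0" using ppos[of k] by (simp add: gg_def)

lemma qp_pos: "k \<ge> 1 \<Longrightarrow> q k / p k > 0" using qpos[of k] ppos[of k] by simp

lemma Ppos: "(\<Prod>k\<in>{1..m}. q k / p k) > 0" by (rule prod_pos) (auto intro: qp_pos)

lemma norm_mult_real: "(cmod (z * of_real x))^2 = (cmod z)^2 * x^2"
  by (simp add: norm_mult power_mult_distrib)

lemma prod_gg_sq: "(\<Prod>k\<in>A. gg k)^2 = (\<Prod>k\<in>A. q k / p k)"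
  by (simp add: prod_power_distrib gg_sq)

lemma norm_prod_gg: "(cmod (z * of_real (\<Prod>k\<in>A. gg k)))^2 = (cmod z)^2 * (\<Prod>k\<in>A. q k / p k)"
  by (simp only: norm_mult_real prod_gg_sq)

lemma below:
  assumes F: "F2 p q r s w" shows "(\<forall>k\<le>j. r k = 0) \<Longrightarrow> s j = 0"
proof (induction j)
  case 0
  have "of_real (sqrt (p 0)) * s 0 = 0" using F[unfolded F2_def, rule_format, of 0] 0 q0 by simp
  then show ?case using ppos[of 0] by auto
next
  case (Suc j)
  then have "s j = 0" by auto
  moreover have "r (Suc j) = 0" using Suc.prems by auto
  ultimately have "of_real (sqrt (p (Suc j))) * s (Suc j) = 0" using F[unfolded F2_def, rule_format, of "Suc j"] by simp
  then show ?case using ppos[of "Suc j"] by auto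
qed

lemma prop_form:
  assumes F: "F2 p q r s w" and W: "\<forall>k>m. w k = 0" and mj: "m \<le> j"
  shows "s j = s m * of_real (\<Prod>k\<in>{Suc m..j}. gg k)"
  using mj
proof (induction j rule: dec_induct)
  case base then show ?case by simp
next
  case (step n)
  have e: "of_real (sqrt (q (Suc n))) * s n + of_real (sqrt (p (Suc n))) * s (Suc n) = 0"
    using F[unfolded F2_def, rule_format, of "Suc n"] W step(1) by simp
  have "of_real (sqrt (p (Suc n))) * s (Suc n) = (of_real (sqrt (q (Suc n))) * s n + of_real (sqrt (p (Suc n))) * s (Suc n)) - of_real (sqrt (q (Suc n))) * s n"
    by simp
  also have "\<dots> = - (of_real (sqrt (q (Suc n))) * s n)" using e by simp
  also have "\<dots> = of_real (- sqrt (q (Suc n))) * s n" by simp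
  also have "- sqrt (q (Suc n)) = sqrt (p (Suc n)) * gg (Suc n)" using sqp_gg[of "Suc n"] by linarith
  also have "of_real (sqrt (p (Suc n)) * gg (Suc n)) * s n = of_real (sqrt (p (Suc n))) * (s n * of_real (gg (Suc n)))"
    by (simp add: algebra_simps)
  finally have "of_real (sqrt (p (Suc n))) * s (Suc n) = of_real (sqrt (p (Suc n))) * (s n * of_real (gg (Suc n)))" .
  then have "s (Suc n) = s n * of_real (gg (Suc n))" using ppos[of "Suc n"] by auto
  then show ?case using step by (simp add: mult.assoc)
qed

lemma recurrent_zero:
  assumes G: "Good p q r s w" and W: "\<forall>k>m. w k = 0" and nCT: "\<not> CT_finite p q" and mj: "m \<le> j"
  shows "s j = 0"
proof -
  have F: "F2 p q r s w" and ss: "summable (\<lambda>j. (cmod (s j))^2)" using G by (auto simp: Good_def)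
  have sm: "s m = 0"
  proof (rule ccontr)
    assume ne: "s m \<noteq> 0"
    define P where "P = (\<Prod>k\<in>{1..m}. q k / p k)"
    have P: "P > 0" unfolding P_def by (rule Ppos)
    have eq: "(\<Prod>k\<in>{1..Suc j}. q k / p k) = (P / (cmod (s m))^2) * (cmod (s (Suc j)))^2" if "j \<ge> m" for j
    proof -
      have h: "s (Suc j) = s m * of_real (\<Prod>k\<in>{Suc m..Suc j}. gg k)" by (rule prop_form[OF F W]) (use that in auto)
      have "(cmod (s (Suc j)))^2 = (cmod (s m))^2 * (\<Prod>k\<in>{Suc m..Suc j}. q k / p k)" unfolding h by (rule norm_prod_gg)
      moreover have "(\<Prod>k\<in>{1..Suc j}. q k / p k) = P * (\<Prod>k\<in>{Suc m..Suc j}. q k / p k)"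
        unfolding P_def by (rule prod_split1) (use that in auto)
      ultimately show ?thesis using ne by (simp add: field_simps)
    qed
    have ev: "eventually (\<lambda>j. (\<Prod>k\<in>{1..Suc j}. q k / p k) = (P / (cmod (s m))^2) * (cmod (s (Suc j)))^2) sequentially"
      by (rule eventually_mono[OF eventually_ge_at_top[of m]]) (rule eq)
    have "summable (\<lambda>j. (cmod (s (Suc j)))^2)" using ss summable_Suc_iff[where f="\<lambda>j. (cmod (s j))^2"] by simp
    then have "summable (\<lambda>j. (P / (cmod (s m))^2) * (cmod (s (Suc j)))^2)"
      by (rule summable_mult)
    then have "summable (\<lambda>j. \<Prod>k\<in>{1..Suc j}. q k / p k)" using summable_cong[OF ev] by simp
    with nCT show False by (simp add: CT_finite_def)
  qed
  show ?thesis using prop_form[OF F W mj] sm by simp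
qed

definition sA :: "nat \<Rightarrow> nat \<Rightarrow> complex" where
  "sA a j = (if j < a then 0 else of_real (- (sqrt (r a) / sqrt (p a)) * (\<Prod>k\<in>{Suc a..j}. gg k)))"
definition wA :: "nat \<Rightarrow> nat \<Rightarrow> complex" where "wA a j = (if j = a then 1 else 0)"

lemma sA_F2: "F2 p q r (sA a) (wA a)"
  unfolding F2_def
proof
  fix j
  consider "j < a" | "j = a" | "a < j" by linarith
  then show "of_real (sqrt (q j)) * sA a (j - 1) + of_real (sqrt (r j)) * wA a j + of_real (sqrt (p j)) * sA a j = 0"
  proof cases
    case 1 then show ?thesis by (simp add: sA_def wA_def)
  next
    case 2
    have z: "of_real (sqrt (q j)) * sA a (j - 1) = 0"
    proof (cases "j = 0")
      case True then show ?thesis using q0 by simp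
    next
      case False then show ?thesis using 2 by (simp add: sA_def)
    qed
    have sAa: "sA a a = of_real (- (sqrt (r a) / sqrt (p a)))" by (simp add: sA_def)
    have "of_real (sqrt (p a)) * sA a a = (of_real (sqrt (p a) * (- (sqrt (r a) / sqrt (p a)))) :: complex)"
      by (simp only: sAa of_real_mult)
    also have "sqrt (p a) * (- (sqrt (r a) / sqrt (p a))) = - sqrt (r a)" using ppos[of a] by simp
    finally have "of_real (sqrt (p a)) * sA a a = - of_real (sqrt (r a))" by simp
    then show ?thesis using z 2 by (simp add: wA_def)
  next
    case 3
    then obtain i where i: "j = Suc i" "a \<le> i" by (cases j) auto
    define X where "X = - (sqrt (r a) / sqrt (p a)) * (\<Prod>k\<in>{Suc a..i}. gg k)"
    have s1: "sA a (j - 1) = of_real X" using i by (simp add: sA_def X_def)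
    have s2: "sA a j = of_real (X * gg j)" using i unfolding sA_def X_def by (simp add: mult.assoc)
    have wz: "wA a j = 0" using 3 by (simp add: wA_def)
    have "of_real (sqrt (q j)) * sA a (j - 1) + of_real (sqrt (r j)) * wA a j + of_real (sqrt (p j)) * sA a j
        = of_real (sqrt (q j)) * of_real X + of_real (sqrt (p j)) * of_real (X * gg j)"
      by (simp only: s1 s2 wz mult_zero_right add_0_right)
    also have "\<dots> = (of_real (sqrt (q j) * X + sqrt (p j) * (X * gg j)) :: complex)"
      by (simp only: of_real_add of_real_mult)
    also have "sqrt (q j) * X + sqrt (p j) * (X * gg j) = X * (sqrt (q j) + sqrt (p j) * gg j)"
      by (simp add: algebra_simps)
    also have "\<dots> = 0" by (simp add: sqp_gg)
    finally show ?thesis by simp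
  qed
qed

lemma sA_nz: "r a > 0 \<Longrightarrow> a \<le> j \<Longrightarrow> sA a j \<noteq> 0"
  using ppos[of a] gg_nz by (auto simp: sA_def prod_zero_iff)

lemma sA_norm: "a \<le> j \<Longrightarrow> (cmod (sA a j))^2 = (r a / p a) * (\<Prod>k\<in>{Suc a..j}. q k / p k)"
proof -
  assume "a \<le> j"
  then have "sA a j = 1 * of_real (- (sqrt (r a) / sqrt (p a)) * (\<Prod>k\<in>{Suc a..j}. gg k))" by (simp add: sA_def)
  also have "\<dots> = of_real (- (sqrt (r a) / sqrt (p a))) * of_real (\<Prod>k\<in>{Suc a..j}. gg k)" by (simp only: of_real_mult mult_1_left)
  finally have "(cmod (sA a j))^2 = (cmod (of_real (- (sqrt (r a) / sqrt (p a))) :: complex))^2 * (\<Prod>k\<in>{Suc a..j}. q k / p k)"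
    by (simp only: norm_prod_gg)
  note h = this
  have hc: "(cmod (of_real (- (sqrt (r a) / sqrt (p a))) :: complex))^2 = r a / p a"
    using rnn[of a] ppos[of a] by (simp add: power_divide norm_divide)
  show ?thesis by (rule h[unfolded hc])
qed

lemma sA_Good: assumes ra: "r a > 0" and CT: "CT_finite p q" shows "Good p q r (sA a) (wA a)"
proof -
  have w: "\<forall>j. \<not> r j > 0 \<longrightarrow> wA a j = 0" using ra by (auto simp: wA_def)
  have ev0: "eventually (\<lambda>j. (cmod (wA a j))^2 = 0) sequentially"
    by (rule eventually_mono[OF eventually_gt_at_top[of a]]) (simp add: wA_def)
  have sw: "summable (\<lambda>j. (cmod (wA a j))^2)" using summable_cong[OF ev0] by simp
  define P where "P = (\<Prod>k\<in>{1..a}. q k / p k)"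
  have P: "P > 0" unfolding P_def by (rule Ppos)
  have eq: "(cmod (sA a (Suc j)))^2 = (r a / p a / P) * (\<Prod>k\<in>{1..Suc j}. q k / p k)" if "j \<ge> a" for j
  proof -
    have "(\<Prod>k\<in>{1..Suc j}. q k / p k) = P * (\<Prod>k\<in>{Suc a..Suc j}. q k / p k)"
      unfolding P_def by (rule prod_split1) (use that in auto)
    note h2 = this
    show ?thesis unfolding sA_norm[of a "Suc j", OF le_SucI[OF that]] h2 using P
      by (simp del: prod.cl_ivl_Suc add: field_simps)
  qed
  have ev: "eventually (\<lambda>j. (cmod (sA a (Suc j)))^2 = (r a / p a / P) * (\<Prod>k\<in>{1..Suc j}. q k / p k)) sequentially"
    by (rule eventually_mono[OF eventually_ge_at_top[of a]]) (rule eq)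
  have "summable (\<lambda>j. (r a / p a / P) * (\<Prod>k\<in>{1..Suc j}. q k / p k))"
    using CT by (intro summable_mult) (simp add: CT_finite_def)
  then have "summable (\<lambda>j. (cmod (sA a (Suc j)))^2)" using summable_cong[OF ev] by simp
  then have ss: "summable (\<lambda>j. (cmod (sA a j))^2)" using summable_Suc_iff[where f="\<lambda>j. (cmod (sA a j))^2"] by simp
  show ?thesis using sA_F2 w sw ss by (simp add: Good_def)
qed

definition sB :: "nat \<Rightarrow> nat \<Rightarrow> nat \<Rightarrow> complex" where
  "sB a b j = (if j < b then sA a j else 0)"
definition wB :: "nat \<Rightarrow> nat \<Rightarrow> nat \<Rightarrow> complex" where
  "wB a b j = (if j = a then 1 else if j = b then - (of_real (sqrt (q b)) * sA a (b - 1)) / of_real (sqrt (r b)) else 0)"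

lemma sB_Good: assumes ra: "r a > 0" and rb: "r b > 0" and ab: "a < b" shows "Good p q r (sB a b) (wB a b)"
proof -
  have F: "F2 p q r (sB a b) (wB a b)"
    unfolding F2_def
  proof
    fix j
    consider "j < b" | "j = b" | "b < j" by linarith
    then show "of_real (sqrt (q j)) * sB a b (j - 1) + of_real (sqrt (r j)) * wB a b j + of_real (sqrt (p j)) * sB a b j = 0"
    proof cases
      case 1
      have "of_real (sqrt (q j)) * sA a (j - 1) + of_real (sqrt (r j)) * wA a j + of_real (sqrt (p j)) * sA a j = 0"
        using sA_F2[of a] by (simp add: F2_def)
      moreover have "sB a b (j - 1) = sA a (j - 1)" "sB a b j = sA a j" "wB a b j = wA a j"
        using 1 by (auto simp: sB_def wB_def wA_def)
      ultimately show ?thesis by simp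
    next
      case 2
      have rz: "complex_of_real (sqrt (r b)) \<noteq> 0" using rb by simp
      have "sB a b (j - 1) = sA a (b - 1)" "sB a b j = 0"
        "wB a b j = - (of_real (sqrt (q b)) * sA a (b - 1)) / of_real (sqrt (r b))"
        using 2 ab by (auto simp: sB_def wB_def)
      then show ?thesis using 2 rz by simp
    next
      case 3
      then show ?thesis using ab by (auto simp: sB_def wB_def)
    qed
  qed
  have w: "\<forall>j. \<not> r j > 0 \<longrightarrow> wB a b j = 0" using ra rb by (auto simp: wB_def)
  have ev1: "eventually (\<lambda>j. (cmod (wB a b j))^2 = 0) sequentially"
    by (rule eventually_mono[OF eventually_gt_at_top[of b]]) (use ab in \<open>simp add: wB_def\<close>)
  have ev2: "eventually (\<lambda>j. (cmod (sB a b j))^2 = 0) sequentially"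
    by (rule eventually_mono[OF eventually_gt_at_top[of b]]) (simp add: sB_def)
  show ?thesis using F w summable_cong[OF ev1] summable_cong[OF ev2] by (simp add: Good_def)
qed

lemma T_low: assumes "j \<in> Tset p q r" shows "\<exists>k\<le>j. r k > 0"
proof (rule ccontr)
  assume "\<not> (\<exists>k\<le>j. r k > 0)"
  then have z: "\<forall>k\<le>j. r k = 0" using rnn by (meson not_less order_antisym)
  obtain s w where G: "Good p q r s w" and c: "s j \<noteq> 0 \<or> (1 \<le> j \<and> s (j - 1) \<noteq> 0) \<or> w j \<noteq> 0"
    using assms by (auto simp: Tset_def)
  have F: "F2 p q r s w" and W: "\<forall>j. \<not> r j > 0 \<longrightarrow> w j = 0" using G by (auto simp: Good_def)
  have "s j = 0" by (rule below[OF F]) (use z in auto)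
  moreover have "s (j - 1) = 0" by (rule below[OF F]) (use z in auto)
  moreover have "w j = 0" using W z by auto
  ultimately show False using c by auto
qed

lemma T_A: assumes "r a > 0" "CT_finite p q" "a \<le> j" shows "j \<in> Tset p q r"
  unfolding Tset_def using sA_Good[OF assms(1,2)] sA_nz[OF assms(1,3)] by blast

lemma T_B: assumes ra: "r a > 0" and rb: "r b > 0" and ab: "a < b" and j: "a \<le> j" "j \<le> b"
  shows "j \<in> Tset p q r"
proof (cases "j < b")
  case True
  then have "sB a b j \<noteq> 0" using sA_nz[OF ra j(1)] by (simp add: sB_def)
  then show ?thesis unfolding Tset_def using sB_Good[OF ra rb ab] by blast
next
  case False
  then have jb: "j = b" using j by simp
  have "sB a b (j - 1) \<noteq> 0" using sA_nz[OF ra, of "b - 1"] ab jb by (simp add: sB_def)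
  moreover have "1 \<le> j" using ab jb by simp
  ultimately show ?thesis unfolding Tset_def using sB_Good[OF ra rb ab] by blast
qed

lemma T_rec:
  assumes fin: "finite {k. r k > 0}" and ne: "{k. r k > 0} \<noteq> {}" and nCT: "\<not> CT_finite p q"
    and j: "j \<in> Tset p q r"
  shows "j \<le> Max {k. r k > 0}"
proof (rule ccontr)
  define M where "M = Max {k. r k > 0}"
  assume "\<not> j \<le> Max {k. r k > 0}"
  then have jM: "M < j" by (simp add: M_def)
  obtain s w where G: "Good p q r s w" and c: "s j \<noteq> 0 \<or> (1 \<le> j \<and> s (j - 1) \<noteq> 0) \<or> w j \<noteq> 0"
    using j by (auto simp: Tset_def)
  have W: "\<forall>j. \<not> r j > 0 \<longrightarrow> w j = 0" using G by (auto simp: Good_def)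
  have gt: "\<not> r k > 0" if "k > M" for k using that fin M_def Max_ge by fastforce
  have Wm: "\<forall>k>M. w k = 0" using W gt by auto
  have "s j = 0" by (rule recurrent_zero[OF G Wm nCT]) (use jM in auto)
  moreover have "s (j - 1) = 0" by (rule recurrent_zero[OF G Wm nCT]) (use jM in auto)
  moreover have "w j = 0" using Wm jM by auto
  ultimately show False using c by auto
qed

lemma T_rec1:
  assumes S: "{k. r k > 0} = {a}" and nCT: "\<not> CT_finite p q"
  shows "Tset p q r = {}"
proof (rule ccontr)
  assume "Tset p q r \<noteq> {}"
  then obtain j where j: "j \<in> Tset p q r" by blast
  have ra: "r a > 0" using S by auto
  have oth: "k \<noteq> a \<Longrightarrow> r k = 0" for k using S rnn[of k] by (metis (mono_tags) mem_Collect_eq order_le_less singletonD)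
  obtain k where "k \<le> j" "r k > 0" using T_low[OF j] by blast
  then have aj: "a \<le> j" using oth by fastforce
  have "j \<le> Max {k. r k > 0}" by (rule T_rec) (use S nCT j in auto)
  then have ja: "j = a" using aj S by simp
  obtain s w where G: "Good p q r s w" and c: "s j \<noteq> 0 \<or> (1 \<le> j \<and> s (j - 1) \<noteq> 0) \<or> w j \<noteq> 0"
    using j by (auto simp: Tset_def)
  have F: "F2 p q r s w" and W: "\<forall>j. \<not> r j > 0 \<longrightarrow> w j = 0" using G by (auto simp: Good_def)
  have Wm: "\<forall>k>a. w k = 0" using W oth by auto
  have sa: "s a = 0" by (rule recurrent_zero[OF G Wm nCT]) simp
  have sa1: "s (a - 1) = 0"
  proof (cases "a = 0")
    case True then show ?thesis using sa by simp
  next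
    case False show ?thesis by (rule below[OF F]) (use False oth in auto)
  qed
  have "of_real (sqrt (r a)) * w a = 0" using F[unfolded F2_def, rule_format, of a] sa sa1 by simp
  then have "w a = 0" using ra by simp
  then show False using c ja sa sa1 by auto
qed

end




theorem theorem2:
  fixes p q r :: "nat \<Rightarrow> real"
  assumes nonneg: "\<And>j. p j \<ge> 0" "\<And>j. q j \<ge> 0" "\<And>j. r j \<ge> 0"
    and sum1: "\<And>j. p j + q j + r j = 1"
    and q0: "q 0 = 0"
    and ppos: "\<And>j. p j > 0"
    and qpos: "\<And>j. j \<ge> 1 \<Longrightarrow> q j > 0"
  defines "S \<equiv> {j. r j > 0}"
  shows "(S = {} \<longrightarrow> supp_sub r (HS p q r) = {})
       \<and> (finite S \<and> S \<noteq> {} \<longrightarrow>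
            (CT_finite p q \<longrightarrow> supp_sub r (HS p q r) = {j. j \<ge> (LEAST j. j \<in> S)})
          \<and> (\<not> CT_finite p q \<and> card S = 1 \<longrightarrow> supp_sub r (HS p q r) = {})
          \<and> (\<not> CT_finite p q \<and> card S > 1 \<longrightarrow>
               supp_sub r (HS p q r) = {j. (LEAST j. j \<in> S) \<le> j \<and> j \<le> Max S}))
       \<and> (infinite S \<longrightarrow> supp_sub r (HS p q r) = {j. j \<ge> (LEAST j. j \<in> S)})"
proof -
  interpret qw p q r using nonneg q0 ppos qpos by unfold_locales auto
  have supp: "supp_sub r (HS p q r) = Tset p q r" by (rule supp_T)
  have rS: "\<And>k. k \<in> S \<longleftrightarrow> r k > 0" by (simp add: S_def)
  have lowS: "\<exists>k\<le>j. k \<in> S" if "j \<in> Tset p q r" for j using T_low[OF that] rS by blast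
  have low: "(LEAST j. j \<in> S) \<le> j" if jT: "j \<in> Tset p q r" for j
  proof -
    obtain k where "k \<le> j" "k \<in> S" using lowS[OF jT] by blast
    then show ?thesis using Least_le[of "\<lambda>j. j \<in> S" k] by linarith
  qed
  have LS: "(LEAST j. j \<in> S) \<in> S" if "S \<noteq> {}" using that by (metis LeastI_ex ex_in_conv)
  have P1: "S = {} \<longrightarrow> supp_sub r (HS p q r) = {}"
    using lowS supp by blast
  have P2a: "supp_sub r (HS p q r) = {j. j \<ge> (LEAST j. j \<in> S)}" if "S \<noteq> {}" "CT_finite p q"
  proof -
    have "Tset p q r \<subseteq> {j. j \<ge> (LEAST j. j \<in> S)}" using low by blast
    moreover have "{j. j \<ge> (LEAST j. j \<in> S)} \<subseteq> Tset p q r"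
      using T_A[OF _ that(2)] LS[OF that(1)] rS by blast
    ultimately show ?thesis using supp by blast
  qed
  have P2b: "supp_sub r (HS p q r) = {}" if c1: "card S = 1" and nCT: "\<not> CT_finite p q"
  proof -
    obtain a where "S = {a}" using c1 by (rule card_1_singletonE)
    then have "{k. r k > 0} = {a}" by (simp add: S_def)
    then show ?thesis using T_rec1 nCT supp by simp
  qed
  have P2c: "supp_sub r (HS p q r) = {j. (LEAST j. j \<in> S) \<le> j \<and> j \<le> Max S}"
    if fin: "finite S" and c: "card S > 1" and nCT: "\<not> CT_finite p q"
  proof -
    have ne: "S \<noteq> {}" using c by auto
    define a where "a = (LEAST j. j \<in> S)"
    define b where "b = Max S"
    have aS: "a \<in> S" using LS[OF ne] by (simp add: a_def)
    have bS: "b \<in> S" using Max_in[OF fin ne] by (simp add: b_def)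
    have ab: "a < b"
    proof (rule ccontr)
      assume "\<not> a < b"
      then have "\<forall>x\<in>S. x = a"
        using Least_le[of "\<lambda>j. j \<in> S"] Max_ge[OF fin] unfolding a_def b_def by fastforce
      then have "S = {a}" using aS by blast
      then show False using c by simp
    qed
    have "Tset p q r \<subseteq> {j. a \<le> j \<and> j \<le> b}"
    proof
      fix j assume j: "j \<in> Tset p q r"
      have "j \<le> Max {k. r k > 0}" by (rule T_rec) (use fin ne nCT j in \<open>auto simp: S_def\<close>)
      then show "j \<in> {j. a \<le> j \<and> j \<le> b}" using low[OF j] by (simp add: a_def b_def S_def)
    qed
    moreover have "{j. a \<le> j \<and> j \<le> b} \<subseteq> Tset p q r"
      using T_B[of a b] aS bS ab rS by blast
    ultimately show ?thesis using supp by (simp add: a_def b_def)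
  qed
  have P3: "supp_sub r (HS p q r) = {j. j \<ge> (LEAST j. j \<in> S)}" if inf: "infinite S"
  proof -
    have ne: "S \<noteq> {}" using inf by auto
    define a where "a = (LEAST j. j \<in> S)"
    have aS: "a \<in> S" using LS[OF ne] by (simp add: a_def)
    have "Tset p q r \<subseteq> {j. j \<ge> a}" using low by (auto simp: a_def)
    moreover have "{j. j \<ge> a} \<subseteq> Tset p q r"
    proof
      fix j assume j: "j \<in> {j. j \<ge> a}"
      obtain b where b: "b > j" "b \<in> S" using inf by (meson infinite_nat_iff_unbounded)
      show "j \<in> Tset p q r" using T_B[of a b j] aS b j rS by auto
    qed
    ultimately show ?thesis using supp by (simp add: a_def)
  qed
  show ?thesis using P1 P2a P2b P2c P3 by blast
qed


end
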